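(* Let $A$ be a finite alphabet, $X\subseteq A^{\mathbb{Z}}$ a subshift, $F\colon X\to X$ a cellular automaton on $X$, $\mu$ a $\sigma$-ergodic Borel probability measure on $X$ which is equicontinuous for $(X,F)$, and $B$ a blocking word for $(X,F)$ with $\mu([B]_0)>0$. Fix $k\ge 0$ and a word $u\in A^{2k+1}$. Then the sequence $$W_m(u)=\frac{1}{p(k,m)}\sum_{i=0}^{p(k,m)-1}\mu\Big(R(k,m)\cap F^{-(i+p'(k,m))}([u]_{-k})\Big),\qquad m\in\mathbb{N},$$ is non-decreasing in $m$.
   Context: $A^{\mathbb{Z}}$ has the product topology with metric $d(x,y)=2^{-i}$, $i=\min\{|j|:x_j\ne y_j\}$, and shift $\sigma((x_i)_i)=(x_{i+1})_i$. A subshift is a closed $\sigma$-invariant subset of $A^{\mathbb{Z}}$; a cellular automaton on $X$ is a continuous $F\colon X\to X$ commuting with $\sigma$, with a radius $r$ and local map $f$ such that $F(x)_i=f(x_{i-r},\dots,x_{i+r})$. For $x$ and $p\le q$, $x(p,q)=x_p\cdots x_q$; for a word $u$ and $t\in\mathbb{Z}$, $[u]_t=\{x\in X: x_{t+j-1}=u_j,\ 1\le j\le|u|\}$. A word $B\in A^{2k_0+1}$ is a blocking word for $(X,F)$ if there exist $i$ with $2i+1\ge r$ and words $v_n$ of length $2i+1$ such that every $x\in X$ with $x(-k_0,k_0)=B$ satisfies $F^n(x)(-i,i)=v_n$ for all $n\ge 1$. Equicontinuity point: for all $\varepsilon>0$ there is $\eta>0$ with $d(x,y)\le\eta\Rightarrow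 d(F^ix,F^iy)\le\varepsilon$ for all $i>0$; $\mu$ is equicontinuous for $(X,F)$ if equicontinuity points have $\mu$-measure 1. $R(k,m)$ is the set of points of $X$ having an occurrence of $B$ between coordinates $-m-k$ and $-k$ and another between coordinates $k$ and $m+k$. For $x\in R(k,m)$, $(F^n(x)(-k,k))_{n\ge0}$ depends only on $x(-m-k,m+k)$ and is ultimately periodic with period $p(x,k,m)$ and preperiod $p'(x,k,m)$; $p(k,m)$ is the least common multiple of the $p(x,k,m)$ and $p'(k,m)$ the maximum of the $p'(x,k,m)$ over $x\in R(k,m)$. *)

theory Defs
  imports "HOL-Probability.Probability"
begin

type_synonym 'a config = "int \<Rightarrow> 'a"

definition shift :: "'a config \<Rightarrow> 'a config" where
  "shift x = (\<lambda>i. x (i + 1))"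

definition cdist :: "'a config \<Rightarrow> 'a config \<Rightarrow> real" where
  "cdist x y = (if x = y then 0
     else (1/2) ^ (LEAST n::nat. \<exists>j::int. nat \<bar>j\<bar> = n \<and> x j \<noteq> y j))"

definition window :: "'a config \<Rightarrow> int \<Rightarrow> int \<Rightarrow> 'a list" where
  "window x p q = map x [p..q]"

definition cyl :: "'a config set \<Rightarrow> 'a list \<Rightarrow> int \<Rightarrow> 'a config set" where
  "cyl X u t = {x \<in> X. \<forall>j\<in>{1..length u}. x (t + int j - 1) = u ! (j - 1)}"

text \<open>Closedness in the product topology, i.e. metric closedness for cdist.\<close>
definition closed_conf :: "'a config set \<Rightarrow> bool" where
  "closed_conf X \<longleftrightarrow> (\<forall>x. (\<forall>e>0. \<exists>y\<in>X. cdist x y < e) \<longrightarrow> x \<in> X)"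

definition subshift :: "'a config set \<Rightarrow> bool" where
  "subshift X \<longleftrightarrow> closed_conf X \<and> shift ` X = X"

definition is_CA :: "'a config set \<Rightarrow> ('a config \<Rightarrow> 'a config) \<Rightarrow> nat \<Rightarrow> ('a list \<Rightarrow> 'a) \<Rightarrow> bool" where
  "is_CA X F r f \<longleftrightarrow> F ` X \<subseteq> X \<and>
     (\<forall>x\<in>X. \<forall>i. F x i = f (window x (i - int r) (i + int r)))"

definition blocking_word :: "'a config set \<Rightarrow> ('a config \<Rightarrow> 'a config) \<Rightarrow> nat \<Rightarrow> 'a list \<Rightarrow> bool" where
  "blocking_word X F r B \<longleftrightarrow> (\<exists>k0::nat. length B = 2 * k0 + 1 \<and>
     (\<exists>i::nat. 2 * i + 1 \<ge> r \<and> (\<exists>v :: nat \<Rightarrow> 'a list. (\<forall>n. length (v n) = 2 * i + 1) \<and>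
        (\<forall>x\<in>X. window x (- int k0) (int k0) = B \<longrightarrow>
           (\<forall>n\<ge>1. window ((F ^^ n) x) (- int i) (int i) = v n)))))"

definition equicont_point :: "'a config set \<Rightarrow> ('a config \<Rightarrow> 'a config) \<Rightarrow> 'a config \<Rightarrow> bool" where
  "equicont_point X F x \<longleftrightarrow> x \<in> X \<and> (\<forall>\<epsilon>>0. \<exists>\<eta>>0. \<forall>y\<in>X. cdist x y \<le> \<eta> \<longrightarrow>
      (\<forall>i>0. cdist ((F ^^ i) x) ((F ^^ i) y) \<le> \<epsilon>))"

text \<open>Borel sigma-algebra of the product topology on X (product of discrete spaces, restricted to X).\<close>
definition borel_conf :: "'a config set \<Rightarrow> 'a config measure" where
  "borel_conf X = restrict_space (PiM UNIV (\<lambda>_. count_space UNIV)) X"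

definition borel_prob_on :: "'a config set \<Rightarrow> 'a config measure \<Rightarrow> bool" where
  "borel_prob_on X \<mu> \<longleftrightarrow> prob_space \<mu> \<and> sets \<mu> = sets (borel_conf X) \<and> space \<mu> = X"

definition shift_ergodic :: "'a config set \<Rightarrow> 'a config measure \<Rightarrow> bool" where
  "shift_ergodic X \<mu> \<longleftrightarrow>
     (\<forall>E\<in>sets \<mu>. measure \<mu> {x\<in>X. shift x \<in> E} = measure \<mu> E) \<and>
     (\<forall>E\<in>sets \<mu>. {x\<in>X. shift x \<in> E} = E \<longrightarrow> measure \<mu> E = 0 \<or> measure \<mu> E = 1)"

definition equicont_measure :: "'a config set \<Rightarrow> ('a config \<Rightarrow> 'a config) \<Rightarrow> 'a config measure \<Rightarrow> bool" where
  "equicont_measure X F \<mu> \<longleftrightarrow> (AE x in \<mu>. equicont_point X F x)"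

definition occurs_between :: "'a config set \<Rightarrow> 'a list \<Rightarrow> 'a config \<Rightarrow> int \<Rightarrow> int \<Rightarrow> bool" where
  "occurs_between X B x a b \<longleftrightarrow> (\<exists>t. a \<le> t \<and> t + int (length B) - 1 \<le> b \<and> x \<in> cyl X B t)"

definition Rset :: "'a config set \<Rightarrow> 'a list \<Rightarrow> nat \<Rightarrow> nat \<Rightarrow> 'a config set" where
  "Rset X B k m = {x \<in> X. occurs_between X B x (- int m - int k) (- int k)
                        \<and> occurs_between X B x (int k) (int m + int k)}"

definition ult_period :: "(nat \<Rightarrow> 'b) \<Rightarrow> nat" where
  "ult_period s = (LEAST p. p > 0 \<and> (\<exists>N. \<forall>n\<ge>N. s (n + p) = s n))"

definition ult_preperiod :: "(nat \<Rightarrow> 'b) \<Rightarrow> nat" where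
  "ult_preperiod s = (LEAST N. \<forall>n\<ge>N. s (n + ult_period s) = s n)"

definition orbit_window :: "('a config \<Rightarrow> 'a config) \<Rightarrow> 'a config \<Rightarrow> nat \<Rightarrow> nat \<Rightarrow> 'a list" where
  "orbit_window F x k n = window ((F ^^ n) x) (- int k) (int k)"

definition pkm :: "'a config set \<Rightarrow> ('a config \<Rightarrow> 'a config) \<Rightarrow> 'a list \<Rightarrow> nat \<Rightarrow> nat \<Rightarrow> nat" where
  "pkm X F B k m = Lcm ((\<lambda>x. ult_period (orbit_window F x k)) ` Rset X B k m)"

definition ppkm :: "'a config set \<Rightarrow> ('a config \<Rightarrow> 'a config) \<Rightarrow> 'a list \<Rightarrow> nat \<Rightarrow> nat \<Rightarrow> nat" where
  "ppkm X F B k m = Sup ((\<lambda>x. ult_preperiod (orbit_window F x k)) ` Rset X B k m)"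

definition Wm :: "'a config set \<Rightarrow> ('a config \<Rightarrow> 'a config) \<Rightarrow> 'a config measure \<Rightarrow> 'a list \<Rightarrow> nat \<Rightarrow> 'a list \<Rightarrow> nat \<Rightarrow> real" where
  "Wm X F \<mu> B k u m = (1 / real (pkm X F B k m)) *
     (\<Sum>i<pkm X F B k m. measure \<mu> (Rset X B k m \<inter>
        {x \<in> X. (F ^^ (i + ppkm X F B k m)) x \<in> cyl X u (- int k)}))"

end

theory Submission
  imports Defs
begin


definition tr :: "int \<Rightarrow> 'a config \<Rightarrow> 'a config" where
  "tr a x = (\<lambda>j. x (j + a))"

lemma window_eq_iff: "window x p q = window y p q \<longleftrightarrow> (\<forall>j\<in>{p..q}. x j = y j)"
  by (simp add: window_def map_eq_conv)

lemma window_sub: "window x p q = window y p q \<Longrightarrow> p \<le> p' \<Longrightarrow> q' \<le> q \<Longrightarrow> window x p' q' = window y p' q'"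
  by (auto simp: window_eq_iff)

lemma length_window[simp]: "length (window x p q) = nat (q - p + 1)"
  by (simp add: window_def)

lemma window_nth: "p \<le> j \<Longrightarrow> j \<le> q \<Longrightarrow> window x p q ! nat (j - p) = x j"
  by (simp add: window_def)

lemma window_nth': "k < nat (q - p + 1) \<Longrightarrow> window x p q ! k = x (p + int k)"
  by (simp add: window_def)

lemma window_tr: "window (tr a x) p q = window x (p+a) (q+a)"
  by (rule nth_equalityI) (auto simp: window_nth' tr_def algebra_simps)

lemma cyl_iff_window: "y \<in> cyl X u t \<longleftrightarrow> y \<in> X \<and> window y t (t + int (length u) - 1) = u"
proof -
  have "(\<forall>j\<in>{1..length u}. y (t + int j - 1) = u ! (j - 1)) \<longleftrightarrow> window y t (t + int (length u) - 1) = u"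
  proof
    assume H: "\<forall>j\<in>{1..length u}. y (t + int j - 1) = u ! (j - 1)"
    show "window y t (t + int (length u) - 1) = u"
    proof (rule nth_equalityI)
      fix j assume "j < length (window y t (t + int (length u) - 1))"
      then have j: "j < length u" by simp
      then have "y (t + int j) = u ! j" using H[rule_format, of "Suc j"] by auto
      then show "window y t (t + int (length u) - 1) ! j = u ! j" using j
        by (subst window_nth') auto
    qed simp
  next
    assume H: "window y t (t + int (length u) - 1) = u"
    show "\<forall>j\<in>{1..length u}. y (t + int j - 1) = u ! (j - 1)"
    proof
      fix j assume j: "j \<in> {1..length u}"
      have "u ! (j - 1) = window y t (t + int (length u) - 1) ! (j - 1)" using H by simp
      also have "\<dots> = y (t + int (j - 1))" using j by (subst window_nth') auto
      finally have A: "u ! (j - 1) = y (t + int (j - 1))" .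
      moreover have "t + int j - 1 = t + int (j - 1)" using j by auto
      ultimately show "y (t + int j - 1) = u ! (j - 1)" by metis
    qed
  qed
  then show ?thesis by (auto simp: cyl_def)
qed

lemma ult_per_gen:
  fixes w :: "nat \<Rightarrow> 'b"
  assumes fin: "finite (range w)" and P: "0 < P"
    and step: "\<And>a d. N \<le> a \<Longrightarrow> w a = w (a + d*P) \<Longrightarrow> w (Suc a) = w (Suc a + d*P)"
  shows "\<exists>p n0. 0 < p \<and> (\<forall>n\<ge>n0. w (n + p) = w n)"
proof -
  define h where "h j = w (N + j*P)" for j
  have "range h \<subseteq> range w" by (auto simp: h_def)
  then have "finite (range h)" using fin finite_subset by blast
  then have "\<not> inj h" using finite_imageD infinite_UNIV_nat by blast
  then obtain j1 j2 where "j1 \<noteq> j2" "h j1 = h j2" unfolding inj_def by blast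
  then obtain a b where ab: "a < b" "h a = h b" by (metis linorder_neq_iff)
  define d where "d = b - a"
  define a0 where "a0 = N + a*P"
  have base: "w a0 = w (a0 + d*P)" using ab by (simp add: h_def a0_def d_def algebra_simps diff_mult_distrib)
  have all: "w (a0 + l) = w (a0 + l + d*P)" for l
  proof (induction l)
    case 0 then show ?case using base by simp
  next
    case (Suc l)
    have "w (Suc (a0 + l)) = w (Suc (a0 + l) + d*P)" by (rule step) (use Suc in \<open>auto simp: a0_def\<close>)
    then show ?case by simp
  qed
  have "0 < d*P" using ab P by (simp add: d_def)
  moreover have "\<forall>n\<ge>a0. w (n + d*P) = w n"
  proof (intro allI impI)
    fix n assume "a0 \<le> n"
    then show "w (n + d*P) = w n" using all[of "n - a0"] by simp
  qed
  ultimately show ?thesis by blast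
qed

lemma ult_facts:
  assumes "0 < p" "\<forall>n\<ge>N. s (n + p) = s n"
  shows "0 < ult_period s \<and> (\<forall>n\<ge>ult_preperiod s. s (n + ult_period s) = s n)"
proof -
  have ex: "\<exists>p. p > 0 \<and> (\<exists>N. \<forall>n\<ge>N. s (n + p) = s n)" using assms by blast
  have L: "ult_period s > 0 \<and> (\<exists>N. \<forall>n\<ge>N. s (n + ult_period s) = s n)"
    unfolding ult_period_def by (rule LeastI_ex[OF ex])
  then obtain N' where "\<forall>n\<ge>N'. s (n + ult_period s) = s n" by blast
  then have "\<forall>n\<ge>ult_preperiod s. s (n + ult_period s) = s n"
    unfolding ult_preperiod_def by (rule LeastI)
  with L show ?thesis by blast
qed

lemma avg_lemma:
  fixes s :: "nat \<Rightarrow> 'b" and g :: "'b \<Rightarrow> real"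
  assumes p: "0 < p" and per: "\<forall>n\<ge>N. s (n + p) = s n" and dv: "p dvd P" and P: "0 < P" and NP: "N \<le> P'"
  shows "(1 / real P) * (\<Sum>i<P. g (s (i + P'))) = (1 / real p) * (\<Sum>i<p. g (s (i + N)))"
proof -
  define T where "T a = (\<Sum>i<p. g (s (i + a)))" for a
  obtain p' where p': "p = Suc p'" using p by (cases p) auto
  have TS: "T (Suc a) = T a" if "N \<le> a" for a
  proof -
    have "T a = g (s a) + (\<Sum>i<p'. g (s (Suc i + a)))"
      unfolding T_def p' by (subst sum.lessThan_Suc_shift) simp
    moreover have "T (Suc a) = (\<Sum>i<p'. g (s (i + Suc a))) + g (s (p' + Suc a))"
      unfolding T_def p' by simp
    moreover have "s (p' + Suc a) = s a" using per that p' by (metis add.commute add_Suc_right)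
    ultimately show ?thesis by simp
  qed
  have TN: "T a = T N" if "N \<le> a" for a
    using that
  proof (induction a rule: dec_induct)
    case base then show ?case by simp
  next
    case (step a) then show ?case using TS by simp
  qed
  obtain c where c: "P = c * p" using dv by (metis dvd_def mult.commute)
  have "(\<Sum>i<P. g (s (i + P'))) = (\<Sum>m<c. \<Sum>i\<in>{m*p..<m*p+p}. g (s (i + P')))"
    unfolding c by (rule sum.nat_group[symmetric])
  also have "\<dots> = (\<Sum>m<c. T (m*p + P'))"
  proof (rule sum.cong[OF refl])
    fix m
    have "(\<Sum>i\<in>{m*p..<m*p+p}. g (s (i + P'))) = (\<Sum>i<p. g (s ((i + m*p) + P')))"
    proof -
      have e: "{m*p..<m*p+p} = {0 + m*p..<p + m*p}" by (simp add: add.commute)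
      show ?thesis unfolding e sum.shift_bounds_nat_ivl atLeast0LessThan ..
    qed
    then show "(\<Sum>i\<in>{m*p..<m*p+p}. g (s (i + P'))) = T (m*p + P')" by (simp add: T_def add.assoc)
  qed
  also have "\<dots> = (\<Sum>m<c. T N)"
    by (rule sum.cong[OF refl], rule TN) (use NP in auto)
  also have "\<dots> = real c * T N" by simp
  finally have "(\<Sum>i<P. g (s (i + P'))) = real c * T N" .
  then show ?thesis using c p P by (simp add: T_def)
qed



locale ca =
  fixes X :: "('a::finite) config set" and F :: "'a config \<Rightarrow> 'a config"
    and r :: nat and f :: "'a list \<Rightarrow> 'a" and B :: "'a list" and k0 i :: nat and v :: "nat \<Rightarrow> 'a list"
  assumes shiftX: "shift ` X = X"
    and CA: "is_CA X F r f"
    and lenB: "length B = 2*k0+1"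
    and ir: "r \<le> 2*i+1"
    and block: "\<forall>x\<in>X. window x (- int k0) (int k0) = B \<longrightarrow> (\<forall>n\<ge>1. window ((F^^n) x) (- int i) (int i) = v n)"
begin

lemma tr_add: "tr a (tr b x) = tr (a + b) x"
  by (simp add: tr_def algebra_simps)

lemma tr_0: "tr 0 x = x" by (simp add: tr_def)

lemma shift_in: "x \<in> X \<Longrightarrow> tr 1 x \<in> X"
  using shiftX by (auto simp: tr_def shift_def[abs_def])

lemma unshift_in: "x \<in> X \<Longrightarrow> tr (-1) x \<in> X"
proof -
  assume "x \<in> X"
  then obtain y where y: "y \<in> X" "shift y = x" using shiftX by (metis imageE)
  have "tr (-1) x = y" using y(2) by (auto simp: tr_def shift_def)
  then show ?thesis using y by simp
qed

lemma tr_in: "x \<in> X \<Longrightarrow> tr a x \<in> X"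
proof (induction a rule: int_induct[where k=0])
  case base then show ?case by (simp add: tr_0)
next
  case (step1 a)
  then have "tr 1 (tr a x) \<in> X" using shift_in by blast
  then show ?case by (simp add: tr_add add.commute)
next
  case (step2 a)
  then have "tr (-1) (tr a x) \<in> X" using unshift_in by blast
  then show ?case by (simp add: tr_add)
qed

lemma F_in: "x \<in> X \<Longrightarrow> F x \<in> X"
  using CA by (auto simp: is_CA_def)

lemma Fn_in: "x \<in> X \<Longrightarrow> (F^^n) x \<in> X"
  by (induction n) (auto simp: F_in)

lemma F_loc: "x \<in> X \<Longrightarrow> F x j = f (window x (j - int r) (j + int r))"
  using CA by (auto simp: is_CA_def)

lemma F_tr: "x \<in> X \<Longrightarrow> F (tr a x) = tr a (F x)"
proof
  fix j assume x: "x \<in> X"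
  have "F (tr a x) j = f (window (tr a x) (j - int r) (j + int r))" using F_loc tr_in x by blast
  also have "\<dots> = f (window x (j + a - int r) (j + a + int r))" by (simp add: window_tr algebra_simps)
  also have "\<dots> = F x (j + a)" using F_loc x by simp
  finally show "F (tr a x) j = tr a (F x) j" by (simp add: tr_def)
qed

lemma Fn_tr: "x \<in> X \<Longrightarrow> (F^^n) (tr a x) = tr a ((F^^n) x)"
  by (induction n) (auto simp: F_tr Fn_in)

lemma wall_window:
  assumes x: "x \<in> cyl X B t" and n: "1 \<le> n"
  shows "window ((F^^n) x) (t + int k0 - int i) (t + int k0 + int i) = v n"
proof -
  have xX: "x \<in> X" and w: "window x t (t + int (length B) - 1) = B" using x cyl_iff_window by blast+
  define y where "y = tr (t + int k0) x"
  have yX: "y \<in> X" using xX tr_in y_def by blast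
  have "window y (- int k0) (int k0) = window x t (t + 2 * int k0)"
    by (simp add: y_def window_tr algebra_simps)
  also have "\<dots> = B" using w lenB by (simp add: algebra_simps)
  finally have "window ((F^^n) y) (- int i) (int i) = v n" using block yX n by blast
  then show ?thesis by (simp add: y_def Fn_tr xX window_tr algebra_simps)
qed

lemma wall_pt:
  assumes x: "x \<in> cyl X B t" and n: "1 \<le> n" and q: "- int i \<le> q" "q \<le> int i"
  shows "(F^^n) x (t + int k0 + q) = v n ! nat (q + int i)"
proof -
  have "v n ! nat (q + int i) = window ((F^^n) x) (t + int k0 - int i) (t + int k0 + int i) ! nat ((t + int k0 + q) - (t + int k0 - int i))"
    using wall_window[OF x n] by simp
  also have "\<dots> = (F^^n) x (t + int k0 + q)" using q by (intro window_nth) auto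
  finally show ?thesis by simp
qed

lemma wall_pt':
  assumes x: "x \<in> cyl X B t" and n: "1 \<le> n" and q: "t + int k0 - int i \<le> j" "j \<le> t + int k0 + int i"
  shows "(F^^n) x j = v n ! nat (j - t - int k0 + int i)"
  using wall_pt[OF x n, of "j - t - int k0"] q by (simp add: algebra_simps)

lemma loc_step:
  assumes x: "x \<in> X" and y: "y \<in> X"
    and ag: "\<forall>j'\<in>{j - int r..j + int r}. (F^^a) x j' = (F^^b) y j'"
  shows "(F^^Suc a) x j = (F^^Suc b) y j"
proof -
  have "window ((F^^a) x) (j - int r) (j + int r) = window ((F^^b) y) (j - int r) (j + int r)"
    using ag window_eq_iff by blast
  then show ?thesis using F_loc Fn_in x y by simp
qed

lemma step2:
  assumes x1: "x \<in> cyl X B t1" and x2: "x \<in> cyl X B t2"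
    and y1: "y \<in> cyl X B t1" and y2: "y \<in> cyl X B t2"
    and ag: "\<forall>j\<in>{t1 + int k0 - int i..t2 + int k0 + int i}. (F^^a) x j = (F^^b) y j"
    and vv: "v (Suc a) = v (Suc b)"
  shows "\<forall>j\<in>{t1 + int k0 - int i..t2 + int k0 + int i}. (F^^Suc a) x j = (F^^Suc b) y j"
proof
  fix j assume j: "j \<in> {t1 + int k0 - int i..t2 + int k0 + int i}"
  have xX: "x \<in> X" and yX: "y \<in> X" using x1 y1 by (auto simp: cyl_def)
  show "(F^^Suc a) x j = (F^^Suc b) y j"
  proof (cases "j \<le> t1 + int k0 + int i")
    case True
    then show ?thesis using wall_pt'[OF x1, of "Suc a" j] wall_pt'[OF y1, of "Suc b" j] j vv by simp
  next
    case F1: False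
    show ?thesis
    proof (cases "t2 + int k0 - int i \<le> j")
      case True
      then show ?thesis using wall_pt'[OF x2, of "Suc a" j] wall_pt'[OF y2, of "Suc b" j] j vv by simp
    next
      case False
      then show ?thesis using F1 ir ag by (intro loc_step[OF xX yX]) auto
    qed
  qed
qed

lemma step3:
  assumes x0: "x \<in> cyl X B t0" and x1: "x \<in> cyl X B t1" and x2: "x \<in> cyl X B t2"
    and sp: "t0 + int r \<le> t1" "t1 + int r \<le> t2"
    and ag: "\<forall>j\<in>{t0 + int k0 - int i..t2 + int k0 + int i}. (F^^a) x j = (F^^b) x j"
  shows "\<forall>j\<in>{t0 + int k0 - int i..t2 + int k0 + int i}. (F^^Suc a) x j = (F^^Suc b) x j"
proof
  fix j assume j: "j \<in> {t0 + int k0 - int i..t2 + int k0 + int i}"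
  have xX: "x \<in> X" using x1 by (auto simp: cyl_def)
  have mid: "(F^^Suc a) x (t1 + int k0 + q) = (F^^Suc b) x (t1 + int k0 + q)"
    if q: "- int i \<le> q" "q \<le> int i" for q
    using q sp ag by (intro loc_step[OF xX xX]) auto
  show "(F^^Suc a) x j = (F^^Suc b) x j"
  proof (cases "j \<le> t0 + int k0 + int i")
    case True
    define q where "q = j - t0 - int k0"
    have q: "- int i \<le> q" "q \<le> int i" using True j by (auto simp: q_def)
    have "(F^^Suc a) x j = (F^^Suc a) x (t1 + int k0 + q)"
      using wall_pt[OF x0, of "Suc a" q] wall_pt[OF x1, of "Suc a" q] q by (simp add: q_def)
    also have "\<dots> = (F^^Suc b) x (t1 + int k0 + q)" using mid q by blast
    also have "\<dots> = (F^^Suc b) x j"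
      using wall_pt[OF x0, of "Suc b" q] wall_pt[OF x1, of "Suc b" q] q by (simp add: q_def)
    finally show ?thesis .
  next
    case F1: False
    show ?thesis
    proof (cases "t2 + int k0 - int i \<le> j")
      case True
      define q where "q = j - t2 - int k0"
      have q: "- int i \<le> q" "q \<le> int i" using True j by (auto simp: q_def)
      have "(F^^Suc a) x j = (F^^Suc a) x (t1 + int k0 + q)"
        using wall_pt[OF x2, of "Suc a" q] wall_pt[OF x1, of "Suc a" q] q by (simp add: q_def)
      also have "\<dots> = (F^^Suc b) x (t1 + int k0 + q)" using mid q by blast
      also have "\<dots> = (F^^Suc b) x j"
        using wall_pt[OF x2, of "Suc b" q] wall_pt[OF x1, of "Suc b" q] q by (simp add: q_def)
      finally show ?thesis .
    next
      case False
      then show ?thesis using F1 ir ag sp by (intro loc_step[OF xX xX]) auto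
    qed
  qed
qed

end


lemma space_BX[simp]: "space (borel_conf X) = X"
  by (simp add: borel_conf_def space_restrict_space space_PiM)

lemma coord_meas: "(\<lambda>x. x j) \<in> measurable (borel_conf X) (count_space UNIV)"
  unfolding borel_conf_def by (rule measurable_restrict_space1) (rule measurable_component_singleton, simp)

lemma map_meas:
  fixes X :: "('a::countable) config set"
  shows "(\<lambda>x. map x L) \<in> measurable (borel_conf X) (count_space UNIV)"
proof (induction L)
  case Nil then show ?case by simp
next
  case (Cons a L)
  have "(\<lambda>x. (\<lambda>c y. c # map y L) (x a) x) \<in> measurable (borel_conf X) (count_space UNIV)"
  proof (rule measurable_compose_countable'[where I=UNIV and f="\<lambda>c y. c # map y L" and g="\<lambda>x. x a"])
    fix c :: 'a
    show "(\<lambda>x. c # map x L) \<in> measurable (borel_conf X) (count_space UNIV)"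
      using measurable_compose[OF Cons.IH measurable_count_space[of "\<lambda>l. c # l" UNIV]] by simp
  qed (auto intro: coord_meas)
  then show ?case by simp
qed

lemma window_meas:
  fixes X :: "('a::countable) config set"
  shows "(\<lambda>x. window x p q) \<in> measurable (borel_conf X) (count_space UNIV)"
  unfolding window_def by (rule map_meas)

lemma cyl_sets:
  fixes X :: "('a::countable) config set"
  shows "cyl X u t \<in> sets (borel_conf X)"
proof -
  have "cyl X u t = (\<lambda>x. window x t (t + int (length u) - 1)) -` {u} \<inter> space (borel_conf X)"
    by (auto simp: cyl_iff_window)
  also have "\<dots> \<in> sets (borel_conf X)" by (rule measurable_sets[OF window_meas]) simp
  finally show ?thesis .
qed

lemma Rset_sets:
  fixes X :: "('a::countable) config set"
  shows "Rset X B k m \<in> sets (borel_conf X)"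
proof -
  define T1 where "T1 = {t. - int m - int k \<le> t \<and> t + int (length B) - 1 \<le> - int k}"
  define T2 where "T2 = {t. int k \<le> t \<and> t + int (length B) - 1 \<le> int m + int k}"
  have fin1: "finite T1"
    by (rule finite_subset[of _ "{- int m - int k..- int k + 1}"]) (auto simp: T1_def)
  have fin2: "finite T2"
    by (rule finite_subset[of _ "{int k..int m + int k + 1}"]) (auto simp: T2_def)
  note fin = fin1 fin2
  have "Rset X B k m = (\<Union>t\<in>T1. cyl X B t) \<inter> (\<Union>t\<in>T2. cyl X B t)"
    by (auto simp: Rset_def occurs_between_def T1_def T2_def cyl_def)
  also have "\<dots> \<in> sets (borel_conf X)" using fin by (intro sets.Int sets.finite_UN cyl_sets) auto
  finally show ?thesis .
qed

context ca begin

lemma F_meas: "F \<in> measurable (borel_conf X) (borel_conf X)"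
proof -
  have "F \<in> measurable (borel_conf X) (Pi\<^sub>M UNIV (\<lambda>_. count_space UNIV))"
  proof -
    have "(\<lambda>\<omega> j. F \<omega> j) \<in> measurable (borel_conf X) (Pi\<^sub>M UNIV (\<lambda>_. count_space UNIV))"
    proof (rule measurable_PiM_single')
      fix j :: int
      have "(\<lambda>\<omega>. f (window \<omega> (j - int r) (j + int r))) \<in> measurable (borel_conf X) (count_space UNIV)"
        using measurable_compose[OF window_meas measurable_count_space[of f UNIV]] by simp
      then show "(\<lambda>\<omega>. F \<omega> j) \<in> measurable (borel_conf X) (count_space UNIV)"
        by (rule measurable_cong[THEN iffD1, rotated]) (simp add: F_loc)
    qed (simp add: space_PiM)
    then show ?thesis by simp
  qed
  then show ?thesis unfolding borel_conf_def[of X]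
    by (intro measurable_restrict_space2) (auto simp: F_in space_restrict_space space_PiM)
qed

lemma Fn_meas: "(F^^n) \<in> measurable (borel_conf X) (borel_conf X)"
  by (induction n) (auto intro: measurable_compose[OF _ F_meas])

lemma pre_sets: "{x \<in> X. (F^^n) x \<in> cyl X u t} \<in> sets (borel_conf X)"
proof -
  have "{x \<in> X. (F^^n) x \<in> cyl X u t} = (F^^n) -` cyl X u t \<inter> space (borel_conf X)" by auto
  also have "\<dots> \<in> sets (borel_conf X)" by (rule measurable_sets[OF Fn_meas cyl_sets])
  finally show ?thesis .
qed

end

lemma three_elems:
  fixes A :: "nat set"
  assumes "finite A" "2 < card A"
  shows "\<exists>a b c. a \<in> A \<and> b \<in> A \<and> c \<in> A \<and> a < b \<and> b < c"
proof -
  define a where "a = Min A"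
  define A1 where "A1 = A - {a}"
  define b where "b = Min A1"
  define A2 where "A2 = A1 - {b}"
  define c where "c = Min A2"
  have ne: "A \<noteq> {}" using assms by auto
  have a: "a \<in> A" using Min_in[OF assms(1) ne] a_def by simp
  have cA1: "1 < card A1" using assms a by (simp add: A1_def)
  have f1: "finite A1" using assms by (simp add: A1_def)
  have ne1: "A1 \<noteq> {}" using cA1 by auto
  have b: "b \<in> A1" using Min_in[OF f1 ne1] b_def by simp
  have cA2: "0 < card A2" using cA1 b f1 by (simp add: A2_def)
  have f2: "finite A2" using f1 by (simp add: A2_def)
  have ne2: "A2 \<noteq> {}" using cA2 by auto
  have c: "c \<in> A2" using Min_in[OF f2 ne2] c_def by simp
  have "a \<le> b" using b assms(1) by (simp add: a_def A1_def)
  then have ab: "a < b" using b by (auto simp: A1_def)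
  have "b \<le> c" using c f1 by (simp add: b_def A2_def)
  then have bc: "b < c" using c by (auto simp: A2_def)
  show ?thesis using a b c ab bc by (auto simp: A1_def A2_def)
qed



context ca begin

lemma shift_in': "x \<in> X \<Longrightarrow> shift x \<in> X" using shiftX by blast

lemma cyl_shift: "{x \<in> X. shift x \<in> cyl X B t} = cyl X B (t + 1)"
  by (auto simp: cyl_def shift_def algebra_simps intro: shift_in'[unfolded shift_def])

lemma three_occ:
  assumes P: "prob_space \<mu>" and S: "sets \<mu> = sets (borel_conf X)" and Sp: "space \<mu> = X"
    and inv: "\<forall>E\<in>sets \<mu>. measure \<mu> {x\<in>X. shift x \<in> E} = measure \<mu> E"
    and pos: "measure \<mu> (cyl X B 0) > 0"
  shows "\<exists>x j1 j2 j3. j1 < j2 \<and> j2 < j3 \<and> x \<in> cyl X B (int (j1*D)) \<and> x \<in> cyl X B (int (j2*D)) \<and> x \<in> cyl X B (int (j3*D))"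
proof (rule ccontr)
  assume H: "\<not> ?thesis"
  interpret prob_space \<mu> by (rule P)
  define \<beta> where "\<beta> = measure \<mu> (cyl X B 0)"
  define C where "C j = cyl X B (int (j*D))" for j
  have Cs: "C j \<in> sets \<mu>" for j using S cyl_sets C_def by auto
  have mc: "measure \<mu> (cyl X B (int n)) = \<beta>" for n
  proof (induction n)
    case 0 then show ?case by (simp add: \<beta>_def)
  next
    case (Suc n)
    have "cyl X B (int (Suc n)) = {x \<in> X. shift x \<in> cyl X B (int n)}" using cyl_shift[of "int n"] by (simp add: add.commute)
    then show ?case using inv[rule_format, of "cyl X B (int n)"] Suc cyl_sets[of X B "int n"] S by simp
  qed
  define N where "N = nat \<lceil>3 / \<beta>\<rceil>"
  have bpos: "\<beta> > 0" using pos \<beta>_def by simp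
  have "3 / \<beta> \<le> real N" unfolding N_def by linarith
  then have N3: "3 \<le> real N * \<beta>" using bpos by (simp add: field_simps)
  have int: "integrable \<mu> (indicator (C j) :: _ \<Rightarrow> real)" for j
    using Cs by (intro integrable_real_indicator) (auto simp: less_top[symmetric])
  have card2: "(\<Sum>j<N. indicator (C j) x) \<le> (2::real)" if x: "x \<in> space \<mu>" for x
  proof -
    have "(\<Sum>j<N. indicator (C j) x) = (\<Sum>j\<in>{..<N}. of_bool (x \<in> C j) :: real)"
      by (simp add: indicator_def)
    also have "\<dots> = real (card ({..<N} \<inter> {j. x \<in> C j}))"
      by (rule sum_of_bool_eq) (rule finite_lessThan)+
    finally have e: "(\<Sum>j<N. indicator (C j) x) = real (card ({..<N} \<inter> {j. x \<in> C j}))" .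
    have "card ({..<N} \<inter> {j. x \<in> C j}) \<le> 2"
    proof (rule ccontr)
      assume "\<not> ?thesis"
      then have "2 < card ({..<N} \<inter> {j. x \<in> C j})" by simp
      then obtain a b c where "a \<in> {..<N} \<inter> {j. x \<in> C j}" "b \<in> {..<N} \<inter> {j. x \<in> C j}"
          "c \<in> {..<N} \<inter> {j. x \<in> C j}" "a < b" "b < c"
        using three_elems[of "{..<N} \<inter> {j. x \<in> C j}"] by blast
      then have "x \<in> C a" "x \<in> C b" "x \<in> C c" "a < b" "b < c" by auto
      then show False using H unfolding C_def by blast
    qed
    then show ?thesis using e by simp
  qed
  have mc': "measure \<mu> (C j) = \<beta>" for j unfolding C_def by (rule mc)
  have sub: "C j \<subseteq> space \<mu>" for j using Cs sets.sets_into_space by blast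
  have "real N * \<beta> = (\<Sum>j<N. measure \<mu> (C j))" using mc' by simp
  also have "\<dots> = (\<Sum>j<N. integral\<^sup>L \<mu> (indicator (C j)))"
    using sub by (simp add: Int_absorb2)
  also have "\<dots> = integral\<^sup>L \<mu> (\<lambda>x. \<Sum>j<N. indicator (C j) x)"
    using int by simp
  also have "\<dots> \<le> integral\<^sup>L \<mu> (\<lambda>x. 2)"
    by (rule integral_mono) (auto intro: int card2)
  also have "\<dots> = 2" by (simp add: prob_space)
  finally show False using N3 by linarith
qed

end


context ca begin

lemma fin_windows: "finite ((\<lambda>x. window x lo hi) ` (S :: 'a config set))"
  by (rule finite_subset[OF _ finite_lists_length_eq[of UNIV "nat (hi - lo + 1)"]]) auto

lemma v_per:
  assumes x0: "x \<in> cyl X B t0" and x1: "x \<in> cyl X B t1" and x2: "x \<in> cyl X B t2"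
    and sp: "t0 + int r \<le> t1" "t1 + int r \<le> t2"
  shows "\<exists>P0 N0. 0 < P0 \<and> (\<forall>n\<ge>N0. v (n + P0) = v n)"
proof -
  define lo where "lo = t0 + int k0 - int i"
  define hi where "hi = t2 + int k0 + int i"
  define w where "w n = window ((F^^n) x) lo hi" for n
  have fin: "finite (range w)" using fin_windows[of lo hi "range (\<lambda>n. (F^^n) x)"] by (simp add: image_image w_def)
  have step: "w (Suc a) = w (Suc a + d*1)" if "0 \<le> a" "w a = w (a + d*1)" for a d
  proof -
    have "\<forall>j\<in>{lo..hi}. (F^^a) x j = (F^^(a+d)) x j" using that(2) by (simp add: w_def window_eq_iff)
    then have "\<forall>j\<in>{lo..hi}. (F^^Suc a) x j = (F^^Suc (a+d)) x j"
      using step3[OF x0 x1 x2 sp] unfolding lo_def hi_def by blast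
    then show ?thesis by (simp add: w_def window_eq_iff)
  qed
  obtain p n0 where p: "0 < p" "\<forall>n\<ge>n0. w (n + p) = w n"
    using ult_per_gen[OF fin _ step] by auto
  have "\<forall>n\<ge>max n0 1. v (n + p) = v n"
  proof (intro allI impI)
    fix n assume n: "max n0 1 \<le> n"
    have "v (n + p) = window ((F^^(n+p)) x) (t1 + int k0 - int i) (t1 + int k0 + int i)"
      using wall_window[OF x1, of "n+p"] n by simp
    also have "\<dots> = window ((F^^n) x) (t1 + int k0 - int i) (t1 + int k0 + int i)"
    proof -
      have "w (n + p) = w n" using p(2) n by simp
      then show ?thesis unfolding w_def by (rule window_sub) (use sp in \<open>simp_all add: lo_def hi_def\<close>)
    qed
    also have "\<dots> = v n" using wall_window[OF x1, of n] n by simp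
    finally show "v (n + p) = v n" .
  qed
  then show ?thesis using p(1) by blast
qed

lemma vper_iter:
  assumes "\<forall>n\<ge>N0. v (n + P0) = v n" "N0 \<le> n"
  shows "v (n + d*P0) = v n"
proof (induction d)
  case 0 then show ?case by simp
next
  case (Suc d)
  have "v (n + Suc d * P0) = v ((n + d*P0) + P0)" by (simp add: algebra_simps)
  also have "\<dots> = v (n + d*P0)" using assms by simp
  finally show ?case using Suc by simp
qed

lemma col_per:
  assumes P0: "0 < P0" and vp: "\<forall>n\<ge>N0. v (n + P0) = v n"
    and x1: "x \<in> cyl X B t1" and x2: "x \<in> cyl X B t2"
    and c: "t1 + int k0 - int i \<le> - int k" "int k \<le> t2 + int k0 + int i"
  shows "\<exists>p n0. 0 < p \<and> (\<forall>n\<ge>n0. orbit_window F x k (n + p) = orbit_window F x k n)"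
proof -
  define lo where "lo = t1 + int k0 - int i"
  define hi where "hi = t2 + int k0 + int i"
  define w where "w n = window ((F^^n) x) lo hi" for n
  have fin: "finite (range w)" using fin_windows[of lo hi "range (\<lambda>n. (F^^n) x)"] by (simp add: image_image w_def)
  have step: "w (Suc a) = w (Suc a + d*P0)" if "N0 \<le> a" "w a = w (a + d*P0)" for a d
  proof -
    have "\<forall>j\<in>{lo..hi}. (F^^a) x j = (F^^(a+d*P0)) x j" using that(2) by (simp add: w_def window_eq_iff)
    moreover have "v (Suc a) = v (Suc (a + d*P0))"
      using vper_iter[OF vp, of "Suc a" d] that(1) by simp
    ultimately have "\<forall>j\<in>{lo..hi}. (F^^Suc a) x j = (F^^Suc (a+d*P0)) x j"
      using step2[OF x1 x2 x1 x2] unfolding lo_def hi_def by blast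
    then show ?thesis by (simp add: w_def window_eq_iff)
  qed
  obtain p n0 where p: "0 < p" "\<forall>n\<ge>n0. w (n + p) = w n"
    using ult_per_gen[where N=N0, OF fin P0 step] by auto
  have "\<forall>n\<ge>n0. orbit_window F x k (n + p) = orbit_window F x k n"
  proof (intro allI impI)
    fix n assume "n0 \<le> n"
    then have "w (n + p) = w n" using p(2) by blast
    then show "orbit_window F x k (n + p) = orbit_window F x k n"
      unfolding orbit_window_def w_def by (rule window_sub) (use c in \<open>simp_all add: lo_def hi_def\<close>)
  qed
  then show ?thesis using p(1) by blast
qed

lemma col_det:
  assumes x1: "x \<in> cyl X B t1" and x2: "x \<in> cyl X B t2"
    and y1: "y \<in> cyl X B t1" and y2: "y \<in> cyl X B t2"
    and c: "t1 + int k0 - int i \<le> - int k" "int k \<le> t2 + int k0 + int i"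
    and w: "window x (t1 + int k0 - int i) (t2 + int k0 + int i) = window y (t1 + int k0 - int i) (t2 + int k0 + int i)"
  shows "orbit_window F x k = orbit_window F y k"
proof
  fix n
  have "\<forall>j\<in>{t1 + int k0 - int i..t2 + int k0 + int i}. (F^^n) x j = (F^^n) y j"
  proof (induction n)
    case 0 then show ?case using w by (simp add: window_eq_iff)
  next
    case (Suc n) then show ?case using step2[OF x1 x2 y1 y2] by blast
  qed
  then show "orbit_window F x k n = orbit_window F y k n"
    unfolding orbit_window_def window_eq_iff using c by auto
qed

lemma R_facts:
  assumes P0: "0 < P0" and vp: "\<forall>n\<ge>N0. v (n + P0) = v n"
  shows "finite ((\<lambda>x. orbit_window F x k) ` Rset X B k m)
    \<and> (\<forall>x\<in>Rset X B k m. \<exists>p n0. 0 < p \<and> (\<forall>n\<ge>n0. orbit_window F x k (n + p) = orbit_window F x k n))"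
proof
  define T1 where "T1 = {t. - int m - int k \<le> t \<and> t + int (length B) - 1 \<le> - int k}"
  define T2 where "T2 = {t. int k \<le> t \<and> t + int (length B) - 1 \<le> int m + int k}"
  have fin1: "finite T1"
    by (rule finite_subset[of _ "{- int m - int k..- int k + 1}"]) (auto simp: T1_def)
  have fin2: "finite T2"
    by (rule finite_subset[of _ "{int k..int m + int k + 1}"]) (auto simp: T2_def)
  define S where "S t1 t2 = {x. x \<in> cyl X B t1 \<and> x \<in> cyl X B t2}" for t1 t2
  have Rsub: "Rset X B k m \<subseteq> (\<Union>t1\<in>T1. \<Union>t2\<in>T2. S t1 t2)"
    by (auto simp: Rset_def occurs_between_def T1_def T2_def S_def)
  have cT: "t1 + int k0 - int i \<le> - int k \<and> int k \<le> t2 + int k0 + int i" if "t1 \<in> T1" "t2 \<in> T2" for t1 t2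
    using that lenB by (auto simp: T1_def T2_def)
  define col where "col x = orbit_window F x k" for x
  have finS: "finite (col ` S t1 t2)" if t: "t1 \<in> T1" "t2 \<in> T2" for t1 t2
  proof -
    define W where "W x = window x (t1 + int k0 - int i) (t2 + int k0 + int i)" for x :: "'a config"
    define G where "G w = col (SOME y. y \<in> S t1 t2 \<and> W y = w)" for w
    have "col ` S t1 t2 \<subseteq> G ` (W ` S t1 t2)"
    proof
      fix z assume "z \<in> col ` S t1 t2"
      then obtain x where x: "x \<in> S t1 t2" "z = col x" by blast
      define y where "y = (SOME y. y \<in> S t1 t2 \<and> W y = W x)"
      have y: "y \<in> S t1 t2 \<and> W y = W x" unfolding y_def by (rule someI[of _ x]) (use x in simp)
      have "col x = col y" unfolding col_def
        by (rule col_det[of x t1 t2 y]) (use x y cT[OF t] in \<open>auto simp: S_def W_def\<close>)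
      then have "z = G (W x)" using x by (simp add: G_def y_def)
      then show "z \<in> G ` (W ` S t1 t2)" using x by blast
    qed
    moreover have "finite (G ` (W ` S t1 t2))" unfolding W_def using fin_windows by blast
    ultimately show ?thesis using finite_subset by blast
  qed
  have "col ` Rset X B k m \<subseteq> (\<Union>t1\<in>T1. \<Union>t2\<in>T2. col ` S t1 t2)" using Rsub by blast
  moreover have "finite (\<Union>t1\<in>T1. \<Union>t2\<in>T2. col ` S t1 t2)" using fin1 fin2 finS by blast
  ultimately show "finite ((\<lambda>x. orbit_window F x k) ` Rset X B k m)"
    using finite_subset unfolding col_def by blast
  show "\<forall>x\<in>Rset X B k m. \<exists>p n0. 0 < p \<and> (\<forall>n\<ge>n0. orbit_window F x k (n + p) = orbit_window F x k n)"
  proof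
    fix x assume "x \<in> Rset X B k m"
    then obtain t1 t2 where "t1 \<in> T1" "t2 \<in> T2" "x \<in> S t1 t2" using Rsub by blast
    then show "\<exists>p n0. 0 < p \<and> (\<forall>n\<ge>n0. orbit_window F x k (n + p) = orbit_window F x k n)"
      using col_per[OF P0 vp, of x t1 t2] cT by (auto simp: S_def)
  qed
qed

end


theorem mainTheorem6:
  fixes X :: "('a::finite) config set"
    and F :: "'a config \<Rightarrow> 'a config"
    and r :: nat and f :: "'a list \<Rightarrow> 'a"
    and \<mu> :: "'a config measure"
    and B u :: "'a list" and k :: nat
  assumes "subshift X"
    and "is_CA X F r f"
    and "borel_prob_on X \<mu>"
    and "shift_ergodic X \<mu>"
    and "equicont_measure X F \<mu>"
    and "blocking_word X F r B"
    and "measure \<mu> (cyl X B 0) > 0"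
    and "length u = 2 * k + 1"
  shows "mono (\<lambda>m. Wm X F \<mu> B k u m)"
proof -
  have shX: "shift ` X = X" using assms(1) by (simp add: subshift_def)
  obtain k0 i v where lenB: "length B = 2*k0+1" and ir: "r \<le> 2*i+1"
    and blk: "\<forall>x\<in>X. window x (- int k0) (int k0) = B \<longrightarrow> (\<forall>n\<ge>1. window ((F^^n) x) (- int i) (int i) = v n)"
    using assms(6) unfolding blocking_word_def by blast
  interpret ca X F r f B k0 i v
    using shX assms(2) lenB ir blk by unfold_locales auto
  have P: "prob_space \<mu>" and S: "sets \<mu> = sets (borel_conf X)" and Sp: "space \<mu> = X"
    using assms(3) unfolding borel_prob_on_def by auto
  have inv: "\<forall>E\<in>sets \<mu>. measure \<mu> {x\<in>X. shift x \<in> E} = measure \<mu> E"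
    using assms(4) unfolding shift_ergodic_def by blast
  obtain x j1 j2 j3 where j: "j1 < j2" "j2 < j3" and xs: "x \<in> cyl X B (int (j1*(r+1)))"
    "x \<in> cyl X B (int (j2*(r+1)))" "x \<in> cyl X B (int (j3*(r+1)))"
    using three_occ[OF P S Sp inv assms(7), of "r+1"] by blast
  have spn: "a*(r+1) + r \<le> b*(r+1)" if "a < b" for a b :: nat
  proof -
    have "Suc a * (r+1) \<le> b * (r+1)" using that by (intro mult_le_mono1) simp
    then show ?thesis by simp
  qed
  have sp: "int (j1*(r+1)) + int r \<le> int (j2*(r+1))" "int (j2*(r+1)) + int r \<le> int (j3*(r+1))"
    using spn[OF j(1)] spn[OF j(2)] by linarith+
  obtain P0 N0 where P0: "0 < P0" and vp: "\<forall>n\<ge>N0. v (n + P0) = v n"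
    using v_per[OF xs sp] by blast
  interpret prob_space \<mu> by (rule P)
  define R where "R m = Rset X B k m" for m
  define E where "E n = {x\<in>X. (F^^n) x \<in> cyl X u (- int k)}" for n
  define col where "col x = orbit_window F x k" for x
  define per where "per x = ult_period (col x)" for x
  define pp where "pp x = ult_preperiod (col x)" for x
  define PK where "PK m = pkm X F B k m" for m
  define PP where "PP m = ppkm X F B k m" for m
  have RF: "finite (col ` R m) \<and> (\<forall>x\<in>R m. \<exists>p n0. 0 < p \<and> (\<forall>n\<ge>n0. col x (n + p) = col x n))" for m
    using R_facts[OF P0 vp, of k m] unfolding R_def col_def by blast
  have perx: "0 < per x \<and> (\<forall>n\<ge>pp x. col x (n + per x) = col x n)" if "x \<in> R m" for x m
  proof -
    have "\<exists>p n0. 0 < p \<and> (\<forall>n\<ge>n0. col x (n + p) = col x n)" using conjunct2[OF RF[of m]] that by blast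
    then obtain p n0 where pn: "0 < p" "\<forall>n\<ge>n0. col x (n + p) = col x n" by blast
    show ?thesis unfolding per_def pp_def by (rule ult_facts[OF pn])
  qed
  have pk: "0 < PK m \<and> per x dvd PK m \<and> pp x \<le> PP m" if x: "x \<in> R m" for x m
  proof -
    have e1: "PK m = Lcm (per ` R m)"
      by (simp add: PK_def pkm_def R_def per_def col_def)
    have e2: "PP m = Sup (pp ` R m)"
      by (simp add: PP_def ppkm_def R_def pp_def col_def)
    have i1: "per ` R m = ult_period ` (col ` R m)" unfolding per_def by (rule image_image[symmetric])
    have i2: "pp ` R m = ult_preperiod ` (col ` R m)" unfolding pp_def by (rule image_image[symmetric])
    have fc: "finite (col ` R m)" using RF by blast
    have fin: "finite (per ` R m)" "finite (pp ` R m)" unfolding i1 i2 using fc by (rule finite_imageI)+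
    have pos: "\<forall>y\<in>R m. 0 < per y" using perx by blast
    have "0 \<notin> per ` R m" using pos by auto
    then have "PK m \<noteq> 0" using e1 Lcm_0_iff[OF fin(1)] by simp
    moreover have "per x dvd PK m" unfolding e1 using x by (intro dvd_Lcm imageI)
    moreover have "pp x \<le> PP m" unfolding e2 using x fin(2) by (intro le_cSup_finite imageI)
    ultimately show ?thesis by simp
  qed
  have Rs: "R m \<in> sets \<mu>" for m using Rset_sets S R_def by auto
  have Es: "E n \<in> sets \<mu>" for n using pre_sets S E_def by auto
  have RX: "R m \<subseteq> X" for m by (auto simp: R_def Rset_def)
  have RE: "R m \<inter> E n \<in> sets \<mu>" for m n using Rs Es by blast
  have intI: "integrable \<mu> (indicator (R m \<inter> E n) :: _ \<Rightarrow> real)" for m n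
    using RE by (intro integrable_real_indicator) (auto simp: less_top[symmetric])
  have ind: "indicator (R m \<inter> E n) x = (if x \<in> R m \<and> col x n = u then 1 else (0::real))" if "x \<in> X" for x m n
  proof -
    have "x \<in> E n \<longleftrightarrow> col x n = u"
    proof -
      have fX: "(F^^n) x \<in> X" using Fn_in that by blast
      have e: "- int k + int (length u) - 1 = int k" using assms(8) by simp
      have "(F^^n) x \<in> cyl X u (- int k) \<longleftrightarrow> window ((F^^n) x) (- int k) (int k) = u"
        using cyl_iff_window[of "(F^^n) x" X u "- int k"] fX unfolding e by simp
      then show ?thesis using that by (simp add: E_def col_def orbit_window_def)
    qed
    then show ?thesis by (simp add: indicator_def)
  qed
  define g where "g m x = (1 / real (PK m)) * (\<Sum>i<PK m. indicator (R m \<inter> E (i + PP m)) x :: real)" for m x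
  have gint: "integrable \<mu> (g m)" for m
    unfolding g_def using intI by auto
  have W: "Wm X F \<mu> B k u m = integral\<^sup>L \<mu> (g m)" for m
  proof -
    have "integral\<^sup>L \<mu> (g m) = (1 / real (PK m)) * (\<Sum>i<PK m. integral\<^sup>L \<mu> (indicator (R m \<inter> E (i + PP m))))"
      unfolding g_def using intI by simp
    also have "\<dots> = (1 / real (PK m)) * (\<Sum>i<PK m. measure \<mu> (R m \<inter> E (i + PP m)))"
      using RX Sp by (simp add: Int_absorb2 inf.coboundedI1)
    also have "\<dots> = Wm X F \<mu> B k u m"
      by (simp add: Wm_def PK_def PP_def R_def E_def)
    finally show ?thesis by simp
  qed
  have gval: "g m x = (1 / real (per x)) * (\<Sum>i<per x. (if col x (i + pp x) = u then 1 else 0))"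
    if x: "x \<in> R m" for x m
  proof -
    have xX: "x \<in> X" using x RX by blast
    have "g m x = (1 / real (PK m)) * (\<Sum>i<PK m. (\<lambda>w. if w = u then 1 else 0) (col x (i + PP m)))"
      unfolding g_def using ind[OF xX] x by simp
    also have "\<dots> = (1 / real (per x)) * (\<Sum>i<per x. (\<lambda>w. if w = u then 1 else 0) (col x (i + pp x)))"
      using perx[OF x] pk[OF x] by (intro avg_lemma) auto
    finally show ?thesis by simp
  qed
  have ob: "occurs_between X B y a' b'" if "occurs_between X B y a b" "a' \<le> a" "b \<le> b'" for y a b a' b'
    using that unfolding occurs_between_def by (meson order_trans add_right_mono diff_right_mono)
  have Rmono: "R m \<subseteq> R (Suc m)" for m
  proof
    fix y assume "y \<in> R m"
    then have y: "y \<in> X" "occurs_between X B y (- int m - int k) (- int k)"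
      "occurs_between X B y (int k) (int m + int k)" by (auto simp: R_def Rset_def)
    have "occurs_between X B y (- int (Suc m) - int k) (- int k)" by (rule ob[OF y(2)]) simp_all
    moreover have "occurs_between X B y (int k) (int (Suc m) + int k)" by (rule ob[OF y(3)]) simp_all
    ultimately show "y \<in> R (Suc m)" using y(1) by (simp add: R_def Rset_def)
  qed
  have gnn: "0 \<le> g m x" for m x
    unfolding g_def by (intro mult_nonneg_nonneg sum_nonneg) auto
  have gle: "g m x \<le> g (Suc m) x" if x: "x \<in> X" for m x
  proof (cases "x \<in> R m")
    case True
    then have "x \<in> R (Suc m)" using Rmono by blast
    then show ?thesis using gval True by simp
  next
    case False
    then have "g m x = 0" unfolding g_def using ind[OF x] by simp
    then show ?thesis using gnn by simp
  qed
  show ?thesis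
    unfolding mono_iff_le_Suc W
    by (intro allI integral_mono gint) (use gle Sp in auto)
qed


end
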